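(* Let $n\ge3$ be odd, $d,R\in\mathbb{Q}$, $d\ne0$, $R$ not a square, $D=d^2-R$, let $\zeta$ be a primitive $n$th root of unity in $\mathbb{C}$ and $K=\mathbb{Q}(\sqrt R(\zeta-\zeta^{-1}))$. Let $u\in\mathbb{C}$ be any zero of $f_n=f_n(Z,d,R)$ and $L\subseteq\mathbb{C}$ the splitting field of $f_n$ over $\mathbb{Q}$. Then $L$ is the composite field $\mathbb{Q}(u)\cdot K$.
   Context: $f_n(Z,d,R)=\sum_{j=0}^{(n-1)/2}(-1)^j\frac{n}{n-j}\binom{n-j}{j}D^jZ^{n-2j}-2dD^{(n-1)/2}$, which equals $\sqrt D^{\,n}F_n(Z/\sqrt D)-2dD^{(n-1)/2}$ where $F_n(Z)=2T_n(Z/2)$ and $T_n$ is the Chebyshev polynomial of the first kind. *)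

theory Defs
  imports "HOL-Computational_Algebra.Polynomial" Complex_Main
begin

definition f_poly :: "nat \<Rightarrow> rat \<Rightarrow> rat \<Rightarrow> rat poly" where
  "f_poly n d R =
     (let D = d^2 - R in
       (\<Sum>j\<in>{0..(n - 1) div 2}.
          monom ((-1)^j * (of_nat n / of_nat (n - j)) * of_nat ((n - j) choose j) * D^j) (n - 2*j))
       - [: 2 * d * D ^ ((n - 1) div 2) :])"

definition is_subfield :: "complex set \<Rightarrow> bool" where
  "is_subfield F \<longleftrightarrow> 0 \<in> F \<and> 1 \<in> F \<and>
     (\<forall>x\<in>F. \<forall>y\<in>F. x + y \<in> F \<and> x * y \<in> F) \<and>
     (\<forall>x\<in>F. - x \<in> F \<and> inverse x \<in> F)"

definition gen_field :: "complex set \<Rightarrow> complex set" where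
  "gen_field S = \<Inter> {F. S \<subseteq> F \<and> is_subfield F}"

definition splitting_field :: "rat poly \<Rightarrow> complex set" where
  "splitting_field p = gen_field {z. poly (map_poly of_rat p) z = 0}"

definition composite :: "complex set \<Rightarrow> complex set \<Rightarrow> complex set" where
  "composite F G = gen_field (F \<union> G)"

definition primitive_root_unity :: "nat \<Rightarrow> complex \<Rightarrow> bool" where
  "primitive_root_unity n z \<longleftrightarrow> z ^ n = 1 \<and> (\<forall>k. 0 < k \<and> k < n \<longrightarrow> z ^ k \<noteq> 1)"

end

theory Submission
  imports Defs
begin


definition Esum :: "complex \<Rightarrow> complex \<Rightarrow> nat \<Rightarrow> complex" where
  "Esum Z D N = (\<Sum>j\<le>N. (-1)^j * of_nat ((N-j) choose j) * D^j * Z^(N-2*j))"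

definition Hs :: "complex \<Rightarrow> complex \<Rightarrow> nat \<Rightarrow> complex" where
  "Hs a b N = (\<Sum>i\<le>N. a^i * b^(N-i))"

lemma Hs_Suc1: "Hs a b (Suc N) = b * Hs a b N + a^Suc N"
  unfolding Hs_def by (simp add: sum_distrib_left Suc_diff_le mult_ac)

lemma Hs_Suc2: "Hs a b (Suc N) = a * Hs a b N + b^Suc N"
  unfolding Hs_def by (subst sum.atMost_Suc_shift) (simp add: sum_distrib_left mult_ac)

lemma Hs_rec: "Hs a b (Suc (Suc N)) = (a+b) * Hs a b (Suc N) - (a*b) * Hs a b N"
proof -
  have e1: "Hs a b (Suc (Suc N)) = a * Hs a b (Suc N) + b^Suc (Suc N)" by (rule Hs_Suc2)
  have e2: "Hs a b (Suc N) = b * Hs a b N + a^Suc N" by (rule Hs_Suc1)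
  have e3: "Hs a b (Suc N) = a * Hs a b N + b^Suc N" by (rule Hs_Suc2)
  show ?thesis unfolding e1 using e3 by (simp add: algebra_simps)
qed

lemma Hs_rec2: "Hs a b (Suc (Suc N)) = a^(Suc (Suc N)) + b^(Suc (Suc N)) + (a*b) * Hs a b N"
proof -
  have e1: "Hs a b (Suc (Suc N)) = b * Hs a b (Suc N) + a^Suc (Suc N)" by (rule Hs_Suc1)
  have e3: "Hs a b (Suc N) = a * Hs a b N + b^Suc N" by (rule Hs_Suc2)
  show ?thesis unfolding e1 e3 by (simp add: algebra_simps)
qed

lemma term_shift:
  "of_nat ((N-i) choose Suc i) * (Z::complex) * Z^(N - Suc (2*i)) = of_nat ((N-i) choose Suc i) * Z^(N-2*i)"
proof (cases "Suc i \<le> N - i")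
  case True
  then have "N - 2*i = Suc (N - Suc (2*i))" by arith
  then show ?thesis by simp
next
  case False then show ?thesis by (simp add: binomial_eq_0)
qed

lemma Esum_rec: "Esum Z D (Suc (Suc N)) = Z * Esum Z D (Suc N) - D * Esum Z D N"
proof -
  define T where "T M j = (-1)^j * of_nat ((M-j) choose j) * D^j * Z^(M-2*j)" for M j
  have L: "Esum Z D (Suc (Suc N)) = Z^Suc (Suc N) +
     (\<Sum>i\<le>N. (-1)^Suc i * of_nat (((N-i) choose Suc i) + ((N-i) choose i)) * D^Suc i * Z^(N-2*i))"
  proof -
    have "Esum Z D (Suc (Suc N)) = Z^Suc (Suc N) +
     (\<Sum>i\<le>Suc N. (-1)^Suc i * of_nat ((Suc N-i) choose Suc i) * D^Suc i * Z^(N-2*i))"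
      unfolding Esum_def by (subst sum.atMost_Suc_shift) simp
    also have "(\<Sum>i\<le>Suc N. (-1)^Suc i * of_nat ((Suc N-i) choose Suc i) * D^Suc i * Z^(N-2*i))
       = (\<Sum>i\<le>N. (-1)^Suc i * of_nat (((N-i) choose Suc i) + ((N-i) choose i)) * D^Suc i * Z^(N-2*i))"
      by (subst sum.atMost_Suc) (auto intro!: sum.cong simp: Suc_diff_le)
    finally show ?thesis .
  qed
  have R1: "Z * Esum Z D (Suc N) = Z^Suc (Suc N) +
     (\<Sum>i\<le>N. (-1)^Suc i * of_nat ((N-i) choose Suc i) * D^Suc i * Z^(N-2*i))"
  proof -
    have "Z * Esum Z D (Suc N) = Z^Suc (Suc N) +
     (\<Sum>i\<le>N. (-1)^Suc i * D^Suc i * (of_nat ((N-i) choose Suc i) * Z * Z^(N - Suc (2*i))))"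
      unfolding Esum_def by (subst sum.atMost_Suc_shift) (simp add: distrib_left sum_distrib_left mult_ac)
    also have "\<dots> = Z^Suc (Suc N) +
     (\<Sum>i\<le>N. (-1)^Suc i * of_nat ((N-i) choose Suc i) * D^Suc i * Z^(N-2*i))"
      by (simp only: term_shift) (simp add: mult_ac)
    finally show ?thesis .
  qed
  have R2: "D * Esum Z D N = (\<Sum>i\<le>N. (-1)^i * of_nat ((N-i) choose i) * D^Suc i * Z^(N-2*i))"
    unfolding Esum_def by (simp add: sum_distrib_left mult_ac)
  show ?thesis unfolding L R1 R2
    by (simp add: algebra_simps sum_subtractf[symmetric] sum.distrib[symmetric])
qed

lemma Esum_Hs: "Esum (a+b) (a*b) N = Hs a b N"
proof -
  have "Esum (a+b) (a*b) N = Hs a b N \<and> Esum (a+b) (a*b) (Suc N) = Hs a b (Suc N)"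
  proof (induction N)
    case 0 then show ?case by (simp add: Esum_def Hs_def)
  next
    case (Suc N) then show ?case by (simp add: Esum_rec Hs_rec)
  qed
  then show ?thesis by simp
qed

lemma aux_div: "(x::complex) \<noteq> 0 \<Longrightarrow> (x + y) / x * C = C + y * C / x"
  by (simp add: field_simps)

lemma coef_split:
  assumes "j \<le> k" "m = 2*k+1"
  shows "(of_nat m / of_nat (m-j) * of_nat ((m-j) choose j) :: complex) =
         of_nat ((m-j) choose j) + (if j = 0 then 0 else of_nat ((m-j-1) choose (j-1)))"
proof (cases j)
  case 0
  have "(of_nat m :: complex) \<noteq> 0" using assms by (simp only: of_nat_eq_0_iff)
  then show ?thesis by (simp add: 0)
next
  case (Suc i)
  define N where "N = m - j - 1"
  have mj: "m - j = Suc N" using assms unfolding N_def by arith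
  have mN: "m = Suc N + Suc i" using assms Suc unfolding N_def by arith
  have b: "of_nat (Suc N choose Suc i) * of_nat (Suc i) = (of_nat (Suc N) * of_nat (N choose i) :: complex)"
    using Suc_times_binomial_eq[of N i] by (metis of_nat_mult)
  define C where "C = (of_nat (Suc N choose Suc i) :: complex)"
  have m': "(of_nat m :: complex) = of_nat (Suc N) + of_nat (Suc i)" using mN by (simp only: of_nat_add)
  have nz: "(of_nat (Suc N) :: complex) \<noteq> 0" by (simp only: of_nat_eq_0_iff)
  have "(of_nat m / of_nat (Suc N) * C :: complex) = C + of_nat (Suc i) * C / of_nat (Suc N)"
    unfolding m' using nz by (rule aux_div)
  then have "(of_nat m / of_nat (Suc N) * of_nat (Suc N choose Suc i) :: complex) =
        of_nat (Suc N choose Suc i) + of_nat (Suc i) * of_nat (Suc N choose Suc i) / of_nat (Suc N)"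
    unfolding C_def .
  also have "\<dots> = of_nat (Suc N choose Suc i) + of_nat (N choose i)"
    using b by (simp add: field_simps del: of_nat_Suc)
  finally show ?thesis using Suc mj by (simp add: N_def del: of_nat_Suc)
qed

lemma Esum_restrict:
  assumes "m = 2*k+1"
  shows "Esum Z D m = (\<Sum>j\<in>{0..k}. (-1)^j * of_nat ((m-j) choose j) * D^j * Z^(m-2*j))"
  unfolding Esum_def
  by (rule sum.mono_neutral_right) (use assms in \<open>auto simp: binomial_eq_0\<close>)

lemma Gsum_Esum:
  assumes "m = 2*k+1" "k \<ge> 1"
  shows "(\<Sum>j\<in>{0..(m-1) div 2}. (-1)^j * (of_nat m / of_nat (m-j)) * of_nat ((m-j) choose j) * D^j * Z^(m-2*j))
     = Esum Z D m - D * Esum Z D (m-2)"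
proof -
  obtain k' where k': "k = Suc k'" using assms by (cases k) auto
  have km: "(m-1) div 2 = k" using assms by simp
  have "(\<Sum>j\<in>{0..(m-1) div 2}. (-1)^j * (of_nat m / of_nat (m-j)) * of_nat ((m-j) choose j) * D^j * Z^(m-2*j))
     = (\<Sum>j\<in>{0..k}. (-1)^j * of_nat ((m-j) choose j) * D^j * Z^(m-2*j))
     + (\<Sum>j\<in>{0..k}. (-1)^j * (if j = 0 then 0 else of_nat ((m-j-1) choose (j-1))) * D^j * Z^(m-2*j))"
    unfolding km sum.distrib[symmetric]
  proof (rule sum.cong[OF refl])
    fix j assume "j \<in> {0..k}"
    then have j: "j \<le> k" by simp
    have "(-1)^j * (of_nat m / of_nat (m-j)) * of_nat ((m-j) choose j) * D^j * Z^(m-2*j)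
       = (-1)^j * D^j * Z^(m-2*j) * (of_nat m / of_nat (m-j) * of_nat ((m-j) choose j))"
      by (simp only: mult_ac)
    also have "\<dots> = (-1)^j * D^j * Z^(m-2*j) * (of_nat ((m-j) choose j) + (if j = 0 then 0 else of_nat ((m-j-1) choose (j-1))))"
      by (simp only: coef_split[OF j assms(1)])
    finally show "(-1)^j * (of_nat m / of_nat (m-j)) * of_nat ((m-j) choose j) * D^j * Z^(m-2*j) =
      (-1)^j * of_nat ((m-j) choose j) * D^j * Z^(m-2*j) +
      (-1)^j * (if j = 0 then 0 else of_nat ((m-j-1) choose (j-1))) * D^j * Z^(m-2*j)"
      by (simp add: algebra_simps)
  qed
  also have "(\<Sum>j\<in>{0..k}. (-1)^j * of_nat ((m-j) choose j) * D^j * Z^(m-2*j)) = Esum Z D m"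
    using Esum_restrict[OF assms(1)] by simp
  also have "(\<Sum>j\<in>{0..k}. (-1)^j * (if j = 0 then 0 else of_nat ((m-j-1) choose (j-1))) * D^j * Z^(m-2*j))
     = (\<Sum>i\<le>k'. (-1)^Suc i * of_nat (((m-2)-i) choose i) * D^Suc i * Z^((m-2)-2*i))"
    unfolding k' atLeast0AtMost by (subst sum.atMost_Suc_shift) (auto intro!: sum.cong simp: algebra_simps)
  also have "\<dots> = - D * (\<Sum>i\<in>{0..k'}. (-1)^i * of_nat (((m-2)-i) choose i) * D^i * Z^((m-2)-2*i))"
    by (simp add: sum_distrib_left atLeast0AtMost mult_ac)
  also have "(\<Sum>i\<in>{0..k'}. (-1)^i * of_nat (((m-2)-i) choose i) * D^i * Z^((m-2)-2*i)) = Esum Z D (m-2)"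
    using Esum_restrict[of "m-2" k'] assms k' by simp
  finally show ?thesis by simp
qed

lemma Gsum_closed:
  fixes a b :: complex
  assumes "m = 2*k+1" "k \<ge> 1"
  shows "(\<Sum>j\<in>{0..(m-1) div 2}. (-1)^j * (of_nat m / of_nat (m-j)) * of_nat ((m-j) choose j) * (a*b)^j * (a+b)^(m-2*j))
     = a^m + b^m"
proof -
  have m: "m = Suc (Suc (m-2))" using assms by simp
  have "Esum (a+b) (a*b) m - (a*b) * Esum (a+b) (a*b) (m-2) = a^m + b^m"
    unfolding Esum_Hs using Hs_rec2[of a b "m-2"] m by simp
  then show ?thesis using Gsum_Esum[OF assms, of "a*b" "a+b"] by simp
qed




lemma mp_add: "map_poly (of_rat::rat\<Rightarrow>complex) (p+q) = map_poly of_rat p + map_poly of_rat q"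
  by (intro poly_eqI) (simp add: coeff_map_poly of_rat_add)
lemma mp_diff: "map_poly (of_rat::rat\<Rightarrow>complex) (p-q) = map_poly of_rat p - map_poly of_rat q"
  by (intro poly_eqI) (simp add: coeff_map_poly of_rat_diff)
lemma mp_sum: "map_poly (of_rat::rat\<Rightarrow>complex) (sum f A) = (\<Sum>a\<in>A. map_poly of_rat (f a))"
  by (induction A rule: infinite_finite_induct) (simp_all add: mp_add)
lemma mp_const: "map_poly (of_rat::rat\<Rightarrow>complex) [:c:] = [:of_rat c:]"
  by (simp add: map_poly_pCons)

lemma f_eval:
  fixes z :: complex
  shows
  "poly (map_poly of_rat (f_poly n d R)) z =
     (\<Sum>j\<in>{0..(n-1) div 2}. (-1)^j * (of_nat n / of_nat (n-j)) * of_nat ((n-j) choose j)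
        * (of_rat (d^2-R))^j * z^(n-2*j)) - 2 * of_rat d * (of_rat (d^2-R))^((n-1) div 2)"
  unfolding f_poly_def Let_def mp_diff mp_sum mp_const
  by (simp add: map_poly_monom poly_sum poly_monom of_rat_mult of_rat_divide of_rat_power of_rat_diff of_rat_of_nat_eq)




lemma gf_sub: "is_subfield (gen_field S)"
  unfolding is_subfield_def gen_field_def by auto
lemma gf_incl: "S \<subseteq> gen_field S"
  unfolding gen_field_def by auto
lemma gf_least: "S \<subseteq> F \<Longrightarrow> is_subfield F \<Longrightarrow> gen_field S \<subseteq> F"
  unfolding gen_field_def by auto

lemma sf_add: "is_subfield F \<Longrightarrow> x \<in> F \<Longrightarrow> y \<in> F \<Longrightarrow> x + y \<in> F"
  and sf_mult: "is_subfield F \<Longrightarrow> x \<in> F \<Longrightarrow> y \<in> F \<Longrightarrow> x * y \<in> F"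
  and sf_uminus: "is_subfield F \<Longrightarrow> x \<in> F \<Longrightarrow> - x \<in> F"
  and sf_inverse: "is_subfield F \<Longrightarrow> x \<in> F \<Longrightarrow> inverse x \<in> F"
  and sf_0: "is_subfield F \<Longrightarrow> 0 \<in> F"
  and sf_1: "is_subfield F \<Longrightarrow> 1 \<in> F"
  unfolding is_subfield_def by auto

lemma sf_diff: "is_subfield F \<Longrightarrow> x \<in> F \<Longrightarrow> y \<in> F \<Longrightarrow> x - y \<in> F"
  using sf_add[of F x "-y"] sf_uminus[of F y] by simp
lemma sf_divide: "is_subfield F \<Longrightarrow> x \<in> F \<Longrightarrow> y \<in> F \<Longrightarrow> x / y \<in> F"
  using sf_mult[of F x "inverse y"] sf_inverse[of F y] by (simp add: divide_inverse)
lemma sf_power: "is_subfield F \<Longrightarrow> x \<in> F \<Longrightarrow> x ^ m \<in> F"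
  by (induction m) (auto intro: sf_mult sf_1)
lemma sf_of_nat: "is_subfield F \<Longrightarrow> of_nat m \<in> F"
  by (induction m) (auto intro: sf_add sf_1 sf_0)
lemma sf_of_int: "is_subfield F \<Longrightarrow> of_int m \<in> F"
proof (cases "m \<ge> 0")
  case True
  then have "of_int m = (of_nat (nat m) :: complex)" by simp
  then show ?thesis if "is_subfield F" using sf_of_nat[OF that] by simp
next
  case False
  then have "of_int m = - (of_nat (nat (-m)) :: complex)" by simp
  then show ?thesis if "is_subfield F" using sf_uminus[OF that sf_of_nat[OF that]] by simp
qed
lemma sf_of_rat: "is_subfield F \<Longrightarrow> of_rat q \<in> F"
proof -
  assume F: "is_subfield F"
  obtain a b where "quotient_of q = (a, b)" by (cases "quotient_of q")
  then have "q = of_int a / of_int b" by (rule quotient_of_div)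
  then have "of_rat q = (of_int a / of_int b :: complex)" by (simp add: of_rat_divide)
  then show ?thesis using sf_divide[OF F sf_of_int[OF F] sf_of_int[OF F]] by simp
qed
lemma sf_sum: "is_subfield F \<Longrightarrow> (\<And>i. i \<in> A \<Longrightarrow> f i \<in> F) \<Longrightarrow> sum f A \<in> F"
  by (induction A rule: infinite_finite_induct) (auto intro: sf_add sf_0)

lemma Esum_in: "is_subfield F \<Longrightarrow> Z \<in> F \<Longrightarrow> D \<in> F \<Longrightarrow> Esum Z D N \<in> F"
  unfolding Esum_def
  by (intro sf_sum sf_mult sf_power sf_of_nat sf_uminus sf_1) auto

lemma rec_in:
  assumes F: "is_subfield F" and c: "c \<in> F" and p0: "p 0 \<in> F" and p1: "p 1 \<in> F"
    and rec: "\<And>j. p (Suc (Suc j)) = c * p (Suc j) - p j"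
  shows "p j \<in> F"
proof -
  have "p j \<in> F \<and> p (Suc j) \<in> F"
    by (induction j) (use p0 p1 in \<open>auto simp: rec intro: sf_diff sf_mult F c\<close>)
  then show ?thesis by simp
qed

lemma e_rec: "(x::complex) * w = 1 \<Longrightarrow>
  x^Suc (Suc j) + w^Suc (Suc j) = (x + w) * (x^Suc j + w^Suc j) - (x^j + w^j)"
proof -
  assume h: "x * w = 1"
  have "(x + w) * (x^Suc j + w^Suc j) - (x^j + w^j) = x^Suc (Suc j) + w^Suc (Suc j) + (x*w - 1) * (x^j + w^j)"
    by (simp add: algebra_simps)
  then show ?thesis using h by simp
qed

lemma o_rec: "(x::complex) * w = 1 \<Longrightarrow>
  s * (x^Suc (Suc j) - w^Suc (Suc j)) = (x + w) * (s * (x^Suc j - w^Suc j)) - s * (x^j - w^j)"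
proof -
  assume h: "x * w = 1"
  have "(x + w) * (s * (x^Suc j - w^Suc j)) - s * (x^j - w^j) = s * (x^Suc (Suc j) - w^Suc (Suc j)) + s * (x*w - 1) * (x^j - w^j)"
    by (simp add: algebra_simps)
  then show ?thesis using h by simp
qed

lemma roots_are_powers:
  assumes "primitive_root_unity n \<zeta>" "n > 0" "\<omega> ^ n = 1"
  shows "\<exists>j. \<omega> = \<zeta> ^ j"
proof -
  have z0: "\<zeta> \<noteq> 0" using assms unfolding primitive_root_unity_def by (auto simp: power_0_left)
  have inj: "inj_on (\<lambda>k. \<zeta> ^ k) {..<n}"
  proof (rule inj_onI)
    fix i j assume i: "i \<in> {..<n}" and j: "j \<in> {..<n}" and e: "\<zeta> ^ i = \<zeta> ^ j"
    show "i = j"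
    proof (rule ccontr)
      assume "i \<noteq> j"
      then consider "i < j" | "j < i" by arith
      then show False
      proof cases
        case 1
        have "\<zeta> ^ j = \<zeta> ^ i * \<zeta> ^ (j - i)" using 1 by (simp add: power_add[symmetric])
        then have "\<zeta> ^ (j - i) = 1" using e z0 by simp
        then show False using assms(1) 1 j unfolding primitive_root_unity_def by auto
      next
        case 2
        have "\<zeta> ^ i = \<zeta> ^ j * \<zeta> ^ (i - j)" using 2 by (simp add: power_add[symmetric])
        then have "\<zeta> ^ (i - j) = 1" using e z0 by simp
        then show False using assms(1) 2 i unfolding primitive_root_unity_def by auto
      qed
    qed
  qed
  have sub: "(\<lambda>k. \<zeta> ^ k) ` {..<n} \<subseteq> {z. z ^ n = 1}"
  proof
    fix z assume "z \<in> (\<lambda>k. \<zeta> ^ k) ` {..<n}"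
    then obtain k where "z = \<zeta> ^ k" by auto
    then have "z ^ n = (\<zeta> ^ n) ^ k" by (simp add: power_mult[symmetric] mult.commute)
    then show "z \<in> {z. z ^ n = 1}" using assms(1) unfolding primitive_root_unity_def by simp
  qed
  have "card ((\<lambda>k. \<zeta> ^ k) ` {..<n}) = card {z::complex. z ^ n = 1}"
    using card_image[OF inj] card_roots_unity_eq[OF assms(2)] by simp
  then have "(\<lambda>k. \<zeta> ^ k) ` {..<n} = {z. z ^ n = 1}"
    using sub by (intro card_subset_eq finite_roots_unity) (use assms in auto)
  then show ?thesis using assms(3) by auto
qed

lemma Hs_diff: "(a - b) * Hs a b N = a^Suc N - b^Suc N"
proof -
  have "Hs a b (Suc N) = b * Hs a b N + a^Suc N" "Hs a b (Suc N) = a * Hs a b N + b^Suc N"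
    by (rule Hs_Suc1, rule Hs_Suc2)
  then show ?thesis by (simp add: algebra_simps)
qed




theorem proposition2:
  fixes n :: nat and d R :: rat and \<zeta> u :: complex
  assumes "n \<ge> 3" and "odd n"
    and "d \<noteq> 0"
    and "\<not> (\<exists>q::rat. q ^ 2 = R)"
    and "primitive_root_unity n \<zeta>"
    and "poly (map_poly of_rat (f_poly n d R)) u = 0"
  shows "splitting_field (f_poly n d R) =
         composite (gen_field {u}) (gen_field {csqrt (of_rat R) * (\<zeta> - inverse \<zeta>)})"
proof -
  define k where "k = (n-1) div 2"
  have nk: "n = 2*k+1" using assms(2) by (auto simp: k_def elim!: oddE)
  have k1: "k \<ge> 1" using assms(1) nk by simp
  define Dc where "Dc = (of_rat (d^2-R) :: complex)"
  define dc where "dc = (of_rat d :: complex)"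
  define s where "s = csqrt (of_rat R)"
  define \<tau> where "\<tau> = s * (\<zeta> - inverse \<zeta>)"
  define fz :: "complex \<Rightarrow> complex" where "fz z = poly (map_poly of_rat (f_poly n d R)) z" for z
  have R0: "R \<noteq> 0" using assms(4) by (metis power_zero_numeral zero_neq_numeral)
  have s2: "s^2 = of_rat R" by (simp add: s_def)
  have s0: "s \<noteq> 0" using R0 s2 by auto
  have D0: "d^2 - R \<noteq> 0" using assms(4) by auto
  have Dc0: "Dc \<noteq> 0" using D0 by (simp add: Dc_def)
  have Dcs: "Dc = dc^2 - s^2" by (simp add: Dc_def dc_def s2 of_rat_diff of_rat_power)
  have fz_ab: "fz (a+b) = a^n + b^n - 2*dc*Dc^k" if "a*b = Dc" for a b
  proof -
    have "fz (a+b) = (\<Sum>j\<in>{0..(n-1) div 2}. (-1)^j * (of_nat n / of_nat (n-j)) * of_nat ((n-j) choose j)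
        * Dc^j * (a+b)^(n-2*j)) - 2*dc*Dc^k"
      by (simp only: fz_def f_eval Dc_def dc_def k_def)
    also have "(\<Sum>j\<in>{0..(n-1) div 2}. (-1)^j * (of_nat n / of_nat (n-j)) * of_nat ((n-j) choose j)
        * Dc^j * (a+b)^(n-2*j)) = a^n + b^n"
      using Gsum_closed[OF nk k1, of a b] unfolding that .
    finally show ?thesis .
  qed
  define A where "A = Dc^k * (dc + s)"
  define B where "B = Dc^k * (dc - s)"
  have DcN: "Dc^n = Dc^k * Dc^k * Dc" using nk by (simp add: power_add power_mult_distrib mult_2 )
  have rep: "\<exists>p q. z = p + q \<and> p * q = Dc \<and> p^n = A \<and> q^n = B" if z: "fz z = 0" for z
  proof -
    define y where "y = (z + csqrt (z^2 - 4*Dc)) / 2"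
    define q0 where "q0 = z - y"
    have yq: "y * q0 = Dc"
    proof -
      have "y * q0 = (z^2 - (csqrt (z^2 - 4*Dc))^2) / 4"
        unfolding y_def q0_def by (simp add: field_simps power2_eq_square)
      then show ?thesis by simp
    qed
    have zyq: "z = y + q0" by (simp add: q0_def)
    have sum: "y^n + q0^n = 2*dc*Dc^k" using fz_ab[OF yq] z zyq by simp
    have qq: "q0^n = 2*dc*Dc^k - y^n" using sum by (simp add: eq_diff_eq add.commute)
    have prod: "y^n * q0^n = Dc^n" using yq by (simp add: power_mult_distrib[symmetric])
    have "(y^n - dc*Dc^k)^2 = (Dc^k * s)^2"
    proof -
      have "(y^n)^2 = y^n * (2*dc*Dc^k - q0^n)" unfolding qq by (simp add: power2_eq_square)
      also have "\<dots> = 2*dc*Dc^k*y^n - Dc^n" using prod by (simp add: algebra_simps)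
      finally have X: "(y^n)^2 = 2*dc*Dc^k*y^n - Dc^n" .
      have "(y^n - dc*Dc^k)^2 = (y^n)^2 - 2*dc*Dc^k*y^n + dc^2*(Dc^k)^2"
        by (simp add: power2_eq_square algebra_simps)
      also have "\<dots> = dc^2*(Dc^k)^2 - Dc^n" using X by simp
      also have "\<dots> = (Dc^k)^2 * (dc^2 - Dc)" using DcN by (simp add: power2_eq_square algebra_simps)
      also have "\<dots> = (Dc^k * s)^2" using Dcs by (simp add: power_mult_distrib)
      finally show ?thesis .
    qed
    then have "y^n - dc*Dc^k = Dc^k * s \<or> y^n - dc*Dc^k = - (Dc^k * s)"
      by (simp add: power2_eq_iff)
    then show ?thesis
    proof
      assume h: "y^n - dc*Dc^k = Dc^k * s"
      then have "y^n = A" by (simp add: A_def algebra_simps)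
      moreover have "q0^n = B" unfolding qq h[unfolded diff_eq_eq] by (simp add: B_def algebra_simps)
      ultimately show ?thesis using zyq yq by blast
    next
      assume h: "y^n - dc*Dc^k = - (Dc^k * s)"
      then have "y^n = B" by (simp add: B_def algebra_simps)
      moreover have "q0^n = A" unfolding qq h[unfolded diff_eq_eq] by (simp add: A_def algebra_simps)
      ultimately show ?thesis using zyq yq by (metis add.commute mult.commute)
    qed
  qed
  have fu: "fz u = 0" using assms(6) by (simp add: fz_def)
  obtain a b where u: "u = a + b" and ab: "a * b = Dc" and an: "a^n = A" and bn: "b^n = B"
    using rep[OF fu] by blast
  have a0: "a \<noteq> 0" and b0: "b \<noteq> 0" using ab Dc0 by auto
  have z1: "\<zeta> ^ n = 1" using assms(5) by (simp add: primitive_root_unity_def)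
  have z0: "\<zeta> \<noteq> 0" using z1 nk by (auto simp: power_0_left)
  define w where "w = inverse \<zeta>"
  have zw: "\<zeta> * w = 1" using z0 by (simp add: w_def)
  have w1: "w ^ n = 1" using z1 by (simp add: w_def power_inverse)
  define V where "V = Hs a b (n-1)"
  have VE: "V = Esum u Dc (n-1)" using Esum_Hs[of a b "n-1"] by (simp add: V_def u ab)
  have abV: "(a - b) * V = 2 * Dc^k * s"
  proof -
    have sn: "Suc (n-1) = n" using nk by simp
    have "(a - b) * V = a^n - b^n" using Hs_diff[of a b "n-1"] unfolding V_def sn .
    also have "\<dots> = A - B" by (simp add: an bn)
    also have "\<dots> = 2 * Dc^k * s" by (simp add: A_def B_def algebra_simps)
    finally show ?thesis .
  qed
  have V0: "V \<noteq> 0" using abV s0 Dc0 by auto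
  have amb: "a - b = 2 * Dc^k * s / V" using abV V0 by (simp add: field_simps)
  have amb2: "a - b = (2 * Dc^k / V) * s" using amb by simp
  define Fu where "Fu = gen_field {u}"
  define Ft where "Ft = gen_field {\<tau>}"
  have Fus: "is_subfield Fu" and Fts: "is_subfield Ft" by (simp_all add: Fu_def Ft_def gf_sub)
  have uFu: "u \<in> Fu" using gf_incl[of "{u}"] by (simp add: Fu_def)
  have tFt: "\<tau> \<in> Ft" using gf_incl[of "{\<tau>}"] by (simp add: Ft_def)
  have DcF: "Dc \<in> F" if "is_subfield F" for F unfolding Dc_def by (rule sf_of_rat[OF that])
  have VFu: "V \<in> Fu" unfolding VE by (rule Esum_in[OF Fus uFu DcF[OF Fus]])
  have e2: "\<zeta>^2 + w^2 \<in> Ft"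
  proof -
    have "\<tau>^2 = s^2 * (\<zeta>^2 + w^2 - 2 * (\<zeta> * w))"
      unfolding \<tau>_def w_def[symmetric] by (simp add: power2_eq_square algebra_simps)
    then have "\<tau>^2 = of_rat R * (\<zeta>^2 + w^2 - 2)" unfolding zw s2 by simp
    then have "\<zeta>^2 + w^2 = \<tau>^2 / of_rat R + 2" using R0 by (simp add: field_simps)
    then show ?thesis
      using sf_add[OF Fts sf_divide[OF Fts sf_power[OF Fts tFt] sf_of_rat[OF Fts]] sf_of_nat[OF Fts, of 2]]
      by simp
  qed
  have e1: "\<zeta> + w \<in> Ft"
  proof -
    have fam: "(\<zeta>^2)^j + (w^2)^j \<in> Ft" for j
    proof (rule rec_in[OF Fts e2, where p = "\<lambda>j. (\<zeta>^2)^j + (w^2)^j"])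
      show "(\<zeta>^2)^0 + (w^2)^0 \<in> Ft" using sf_of_nat[OF Fts, of 2] by simp
      show "(\<zeta>^2)^1 + (w^2)^1 \<in> Ft" using e2 by simp
      fix j
      have "\<zeta>^2 * w^2 = 1" using zw by (simp add: power_mult_distrib[symmetric])
      then show "(\<zeta>^2)^Suc (Suc j) + (w^2)^Suc (Suc j) = (\<zeta>^2 + w^2) * ((\<zeta>^2)^Suc j + (w^2)^Suc j) - ((\<zeta>^2)^j + (w^2)^j)"
        by (rule e_rec)
    qed
    have ex: "2*(k+1) = n+1" using nk by simp
    have "(\<zeta>^2)^(k+1) = \<zeta>^(n+1)" "(w^2)^(k+1) = w^(n+1)" by (simp_all only: power_mult[symmetric] ex)
    with fam[of "k+1"] have "\<zeta>^(n+1) + w^(n+1) \<in> Ft" by simp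
    then show ?thesis using z1 w1 by simp
  qed
  have eF: "\<zeta>^j + w^j \<in> Ft" for j
  proof (rule rec_in[OF Fts e1, where p = "\<lambda>j. \<zeta>^j + w^j"])
    show "\<zeta>^0 + w^0 \<in> Ft" using sf_of_nat[OF Fts, of 2] by simp
    show "\<zeta>^1 + w^1 \<in> Ft" using e1 by simp
    fix j show "\<zeta>^Suc (Suc j) + w^Suc (Suc j) = (\<zeta> + w) * (\<zeta>^Suc j + w^Suc j) - (\<zeta>^j + w^j)"
      by (rule e_rec[OF zw])
  qed
  have oF: "s * (\<zeta>^j - w^j) \<in> Ft" for j
  proof (rule rec_in[OF Fts e1, where p = "\<lambda>j. s * (\<zeta>^j - w^j)"])
    show "s * (\<zeta>^0 - w^0) \<in> Ft" using sf_0[OF Fts] by simp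
    show "s * (\<zeta>^1 - w^1) \<in> Ft" using tFt by (simp add: \<tau>_def w_def)
    fix j show "s * (\<zeta>^Suc (Suc j) - w^Suc (Suc j)) = (\<zeta> + w) * (s * (\<zeta>^Suc j - w^Suc j)) - s * (\<zeta>^j - w^j)"
      by (rule o_rec[OF zw])
  qed
  define CP where "CP = composite Fu Ft"
  have CPs: "is_subfield CP" by (simp add: CP_def composite_def gf_sub)
  have FuCP: "Fu \<subseteq> CP" and FtCP: "Ft \<subseteq> CP" using gf_incl[of "Fu \<union> Ft"] by (auto simp: CP_def composite_def)
  have rootCP: "z \<in> CP" if z: "fz z = 0" for z
  proof -
    obtain p q where zpq: "z = p + q" and pq: "p * q = Dc" and pn: "p^n = A" and qn: "q^n = B"
      using rep[OF z] by blast
    have "(p / a)^n = 1" using pn an a0 Dc0 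
    proof -
      have A0: "A \<noteq> 0" using an a0 by auto
      show ?thesis using pn an A0 by (simp add: power_divide)
    qed
    moreover have "n > 0" using nk by simp
    ultimately obtain j where j: "p / a = \<zeta> ^ j" using roots_are_powers[OF assms(5)] by blast
    have p: "p = a * \<zeta>^j" using j a0 by (simp add: field_simps)
    have q: "q = b * w^j"
    proof -
      have "q = Dc / p" using pq p a0 z0 by (simp add: field_simps)
      also have "\<dots> = b * w^j" unfolding p ab[symmetric] w_def using a0 z0
        by (simp add: field_simps power_inverse)
      finally show ?thesis .
    qed
    have zeq: "z = (u * (\<zeta>^j + w^j) + (2 * Dc^k / V) * (s * (\<zeta>^j - w^j))) / 2"
    proof -
      have "z = ((a + b) * (\<zeta>^j + w^j) + (a - b) * (\<zeta>^j - w^j)) / 2"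
        unfolding zpq p q by (simp add: algebra_simps)
      also have "\<dots> = ((a + b) * (\<zeta>^j + w^j) + ((2 * Dc^k / V) * s) * (\<zeta>^j - w^j)) / 2"
        by (simp only: amb2)
      finally show ?thesis unfolding u by (simp only: mult.assoc)
    qed
    have mem: "u * (\<zeta>^j + w^j) + (2 * Dc^k / V) * (s * (\<zeta>^j - w^j)) \<in> CP"
    proof -
      have c1: "u \<in> CP" "V \<in> CP" using uFu VFu FuCP by auto
      have c2: "\<zeta>^j + w^j \<in> CP" "s * (\<zeta>^j - w^j) \<in> CP" using eF oF FtCP by auto
      have c3: "(2::complex) \<in> CP" using sf_of_nat[OF CPs, of 2] by simp
      have c4: "2 * Dc^k / V \<in> CP"
        using sf_divide[OF CPs sf_mult[OF CPs c3 sf_power[OF CPs DcF[OF CPs]]] c1(2)] .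
      show ?thesis using sf_add[OF CPs sf_mult[OF CPs c1(1) c2(1)] sf_mult[OF CPs c4 c2(2)]] .
    qed
    have two: "(2::complex) \<in> CP" using sf_of_nat[OF CPs, of 2] by simp
    show ?thesis by (subst zeq) (rule sf_divide[OF CPs mem two])
  qed
  have LCP: "splitting_field (f_poly n d R) \<subseteq> CP"
    unfolding splitting_field_def using rootCP by (intro gf_least CPs) (auto simp: fz_def)
  define L where "L = splitting_field (f_poly n d R)"
  have Ls: "is_subfield L" by (simp add: L_def splitting_field_def gf_sub)
  have rootL: "z \<in> L" if "fz z = 0" for z
    using that gf_incl[of "{z. poly (map_poly of_rat (f_poly n d R)) z = 0}"]
    by (auto simp: L_def splitting_field_def fz_def)
  have uL: "u \<in> L" using rootL[OF fu] .
  have FuL: "Fu \<subseteq> L" unfolding Fu_def using uL by (intro gf_least Ls) auto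
  define u1 where "u1 = a * \<zeta> + b * w"
  define u2 where "u2 = a * w + b * \<zeta>"
  have fu1: "fz u1 = 0"
  proof -
    have "(a*\<zeta>) * (b*w) = (a*b) * (\<zeta>*w)" by (simp only: mult_ac)
    then have "(a*\<zeta>) * (b*w) = Dc" using ab zw by simp
    then have "fz u1 = (a*\<zeta>)^n + (b*w)^n - 2*dc*Dc^k" unfolding u1_def by (rule fz_ab)
    also have "\<dots> = a^n + b^n - 2*dc*Dc^k" using z1 w1 by (simp add: power_mult_distrib)
    also have "\<dots> = 0" using fz_ab[OF ab] fu u by simp
    finally show ?thesis .
  qed
  have fu2: "fz u2 = 0"
  proof -
    have "(a*w) * (b*\<zeta>) = (a*b) * (\<zeta>*w)" by (simp only: mult_ac)
    then have "(a*w) * (b*\<zeta>) = Dc" using ab zw by simp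
    then have "fz u2 = (a*w)^n + (b*\<zeta>)^n - 2*dc*Dc^k" unfolding u2_def by (rule fz_ab)
    also have "\<dots> = a^n + b^n - 2*dc*Dc^k" using z1 w1 by (simp add: power_mult_distrib)
    also have "\<dots> = 0" using fz_ab[OF ab] fu u by simp
    finally show ?thesis .
  qed
  have tau_eq: "\<tau> = (u1 - u2) * V / (2 * Dc^k)"
  proof -
    have "(u1 - u2) * V = (a - b) * V * (\<zeta> - w)" by (simp add: u1_def u2_def algebra_simps)
    also have "\<dots> = 2 * Dc^k * \<tau>" unfolding abV by (simp add: \<tau>_def w_def)
    finally show ?thesis using Dc0 by (simp add: field_simps)
  qed
  have tL: "\<tau> \<in> L" unfolding tau_eq
    using rootL[OF fu1] rootL[OF fu2] FuL VFu
    by (intro sf_divide[OF Ls] sf_mult[OF Ls] sf_diff[OF Ls] sf_power[OF Ls] DcF[OF Ls] sf_of_nat[OF Ls, of 2, simplified]) auto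
  have FtL: "Ft \<subseteq> L" unfolding Ft_def using tL by (intro gf_least Ls) auto
  have "CP \<subseteq> L" unfolding CP_def composite_def using FuL FtL by (intro gf_least Ls) auto
  with LCP show ?thesis by (simp add: CP_def Fu_def Ft_def \<tau>_def s_def L_def)
qed


end
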